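(* Let $H(d,q)$ be the Hamming graph, with intersection numbers $c_i=i$ and $b_i=(d-i)(q-1)$ for $i=0,1,\ldots,d$. Let $A$ and $D$ be its adjacency matrix and distance matrix (same vertex ordering), and let $t=dq^{d-1}(q-1)$. Define $$p(x)=t\left\{ \prod_{i=1}^d\frac{x-b_{0}+qc_{i}}{qc_{i}}- \frac{1}{d(q-1)} \prod_{\substack{i=0\\ i\neq1}}^d \frac{x-b_{0}+qc_{i}}{q(c_{i}-1)}\right\}.$$ Then $D=p(A)$.
   Context: The Hamming graph $H(d,q)$ (with $d\ge 1$, $q\ge 2$) has as vertices all ordered $d$-tuples over a $q$-element set, two vertices being adjacent if and only if they differ in exactly one coordinate. The distance matrix of a connected graph has $(u,v)$ entry equal to the length of a shortest $u$–$v$ path. The intersection numbers of a distance regular graph: for vertices $x,y$ at distance $i$, $c_i$ (resp. $b_i$) is the number of neighbours of $y$ at distance $i-1$ (resp. $i+1$) from $x$. *)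

theory Defs
  imports "HOL-Computational_Algebra.Polynomial"
begin

text \<open>Square matrices with rows and columns indexed by a finite vertex set V
  are represented as functions V => V => real (the common vertex ordering is implicit).\<close>

definition adjacency_matrix :: "('v \<Rightarrow> 'v \<Rightarrow> bool) \<Rightarrow> 'v \<Rightarrow> 'v \<Rightarrow> real" where
  "adjacency_matrix E u v = (if E u v then 1 else 0)"

definition id_matrix :: "'v \<Rightarrow> 'v \<Rightarrow> real" where
  "id_matrix u v = (if u = v then 1 else 0)"

definition mat_mult :: "'v set \<Rightarrow> ('v \<Rightarrow> 'v \<Rightarrow> real) \<Rightarrow> ('v \<Rightarrow> 'v \<Rightarrow> real) \<Rightarrow> 'v \<Rightarrow> 'v \<Rightarrow> real" where
  "mat_mult V A B u v = (\<Sum>w\<in>V. A u w * B w v)"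

fun mat_pow :: "'v set \<Rightarrow> ('v \<Rightarrow> 'v \<Rightarrow> real) \<Rightarrow> nat \<Rightarrow> 'v \<Rightarrow> 'v \<Rightarrow> real" where
  "mat_pow V A 0 = id_matrix"
| "mat_pow V A (Suc k) = mat_mult V (mat_pow V A k) A"

definition poly_matrix :: "'v set \<Rightarrow> real poly \<Rightarrow> ('v \<Rightarrow> 'v \<Rightarrow> real) \<Rightarrow> 'v \<Rightarrow> 'v \<Rightarrow> real" where
  "poly_matrix V p A u v = (\<Sum>k\<le>degree p. coeff p k * mat_pow V A k u v)"

definition edge_rel :: "'v set \<Rightarrow> ('v \<Rightarrow> 'v \<Rightarrow> bool) \<Rightarrow> ('v \<times> 'v) set" where
  "edge_rel V E = {(x, y). x \<in> V \<and> y \<in> V \<and> E x y}"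

definition graph_dist :: "'v set \<Rightarrow> ('v \<Rightarrow> 'v \<Rightarrow> bool) \<Rightarrow> 'v \<Rightarrow> 'v \<Rightarrow> nat" where
  "graph_dist V E u v = (LEAST n. (u, v) \<in> (edge_rel V E) ^^ n)"

definition distance_matrix :: "'v set \<Rightarrow> ('v \<Rightarrow> 'v \<Rightarrow> bool) \<Rightarrow> 'v \<Rightarrow> 'v \<Rightarrow> real" where
  "distance_matrix V E u v = real (graph_dist V E u v)"

definition hamming_vertices :: "nat \<Rightarrow> nat \<Rightarrow> nat list set" where
  "hamming_vertices d q = {xs. length xs = d \<and> set xs \<subseteq> {0..<q}}"

definition hamming_adj :: "nat \<Rightarrow> nat list \<Rightarrow> nat list \<Rightarrow> bool" where
  "hamming_adj d xs ys = (card {i. i < d \<and> xs ! i \<noteq> ys ! i} = 1)"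

definition ham_c :: "nat \<Rightarrow> real" where
  "ham_c i = real i"

definition ham_b :: "nat \<Rightarrow> nat \<Rightarrow> nat \<Rightarrow> real" where
  "ham_b d q i = (real d - real i) * (real q - 1)"

definition hamming_p :: "nat \<Rightarrow> nat \<Rightarrow> real poly" where
  "hamming_p d q =
    (let t = real d * real q ^ (d - 1) * (real q - 1);
         b0 = ham_b d q 0
     in smult t
        ((\<Prod>i\<in>{1..d}. [: (- b0 + real q * ham_c i) / (real q * ham_c i),
                           1 / (real q * ham_c i) :])
         - smult (1 / (real d * (real q - 1)))
           (\<Prod>i\<in>{0..d} - {1}. [: (- b0 + real q * ham_c i) / (real q * (ham_c i - 1)),
                                 1 / (real q * (ham_c i - 1)) :])))"

end

theory Submission
  imports Defs
begin

definition Lop :: "'v set \<Rightarrow> ('v \<Rightarrow> 'v \<Rightarrow> real) \<Rightarrow> ('v \<Rightarrow> real) \<Rightarrow> 'v \<Rightarrow> real" where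
  "Lop V A x v = (\<Sum>w\<in>V. x w * A w v)"

definition PV :: "'v set \<Rightarrow> ('v \<Rightarrow> 'v \<Rightarrow> real) \<Rightarrow> real poly \<Rightarrow> ('v \<Rightarrow> real) \<Rightarrow> 'v \<Rightarrow> real" where
  "PV V A f x v = (\<Sum>k\<le>degree f. coeff f k * ((Lop V A)^^k) x v)"

lemma mat_pow_row: "mat_pow V A k u = ((Lop V A)^^k) (id_matrix u)"
  by (induction k) (auto simp: mat_mult_def Lop_def fun_eq_iff)

lemma poly_matrix_PV: "poly_matrix V p A u v = PV V A p (id_matrix u) v"
  by (simp add: poly_matrix_def PV_def mat_pow_row)

lemma Lop_cong: "(\<And>w. w \<in> V \<Longrightarrow> x w = y w) \<Longrightarrow> Lop V A x v = Lop V A y v"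
  by (simp add: Lop_def)

lemma Lop_lin: "Lop V A (\<lambda>w. a * x w + b * y w) v = a * Lop V A x v + b * Lop V A y v"
  by (simp add: Lop_def sum.distrib sum_distrib_left algebra_simps)

lemma Lop_scale: "Lop V A (\<lambda>w. a * x w) v = a * Lop V A x v"
  by (simp add: Lop_def sum_distrib_left algebra_simps)

lemma Lop_zero: "Lop V A (\<lambda>w. 0) v = 0"
  by (simp add: Lop_def)

lemma Lop_sum: "Lop V A (\<lambda>w. \<Sum>k\<in>K. c k * f k w) v = (\<Sum>k\<in>K. c k * Lop V A (f k) v)"
  unfolding Lop_def by (simp add: sum_distrib_left sum_distrib_right mult.assoc sum.swap[of _ K])

lemma PV_bound: "degree f \<le> N \<Longrightarrow> PV V A f x v = (\<Sum>k\<le>N. coeff f k * ((Lop V A)^^k) x v)"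
  unfolding PV_def by (rule sum.mono_neutral_left) (auto simp: coeff_eq_0)

lemma PV_fun: "PV V A f x = (\<lambda>w. \<Sum>k\<le>degree f. coeff f k * ((Lop V A)^^k) x w)"
  by (simp add: PV_def fun_eq_iff)

lemma PV_pCons: "PV V A (pCons a f) x v = a * x v + Lop V A (PV V A f x) v"
proof -
  have "PV V A (pCons a f) x v = (\<Sum>k\<le>Suc (degree f). coeff (pCons a f) k * ((Lop V A)^^k) x v)"
    by (rule PV_bound) (simp add: degree_pCons_le)
  also have "\<dots> = a * x v + (\<Sum>k\<le>degree f. coeff f k * Lop V A (((Lop V A)^^k) x) v)"
    by (subst sum.atMost_Suc_shift) (simp del: sum.atMost_Suc)
  also have "(\<Sum>k\<le>degree f. coeff f k * Lop V A (((Lop V A)^^k) x) v) = Lop V A (PV V A f x) v"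
    by (simp add: PV_fun Lop_sum)
  finally show ?thesis .
qed

lemma PV_0: "PV V A 0 x v = 0"
  by (simp add: PV_def)

lemma PV_add: "PV V A (f + g) x v = PV V A f x v + PV V A g x v"
proof -
  let ?N = "max (degree f) (degree g)"
  have "PV V A (f+g) x v = (\<Sum>k\<le>?N. coeff (f+g) k * ((Lop V A)^^k) x v)"
    by (rule PV_bound) (rule degree_add_le_max)
  moreover have "PV V A f x v = (\<Sum>k\<le>?N. coeff f k * ((Lop V A)^^k) x v)" by (rule PV_bound) simp
  moreover have "PV V A g x v = (\<Sum>k\<le>?N. coeff g k * ((Lop V A)^^k) x v)" by (rule PV_bound) simp
  ultimately show ?thesis by (simp add: sum.distrib algebra_simps)
qed

lemma PV_diff: "PV V A (f - g) x v = PV V A f x v - PV V A g x v"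
proof -
  let ?N = "max (degree f) (degree g)"
  have "PV V A (f-g) x v = (\<Sum>k\<le>?N. coeff (f-g) k * ((Lop V A)^^k) x v)"
    by (rule PV_bound) (rule degree_diff_le_max)
  moreover have "PV V A f x v = (\<Sum>k\<le>?N. coeff f k * ((Lop V A)^^k) x v)" by (rule PV_bound) simp
  moreover have "PV V A g x v = (\<Sum>k\<le>?N. coeff g k * ((Lop V A)^^k) x v)" by (rule PV_bound) simp
  ultimately show ?thesis by (simp add: sum_subtractf algebra_simps)
qed

lemma PV_smult: "PV V A (smult c f) x v = c * PV V A f x v"
proof -
  have "PV V A (smult c f) x v = (\<Sum>k\<le>degree f. coeff (smult c f) k * ((Lop V A)^^k) x v)"
    by (rule PV_bound) (rule degree_smult_le)
  thus ?thesis by (simp add: PV_def sum_distrib_left algebra_simps)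
qed

lemma PV_mult: "PV V A (f * g) x = PV V A f (PV V A g x)"
proof (induction f rule: pCons_induct)
  case 0
  then show ?case by (simp add: fun_eq_iff PV_0)
next
  case (pCons a f)
  show ?case
  proof
    fix v
    have "PV V A (pCons a f * g) x v = a * PV V A g x v + Lop V A (PV V A (f*g) x) v"
      by (simp add: PV_add PV_smult PV_pCons)
    also have "\<dots> = PV V A (pCons a f) (PV V A g x) v" by (simp add: pCons.IH PV_pCons)
    finally show "PV V A (pCons a f * g) x v = PV V A (pCons a f) (PV V A g x) v" .
  qed
qed

lemma PV_cong: "(\<And>w. w \<in> V \<Longrightarrow> x w = y w) \<Longrightarrow> v \<in> V \<Longrightarrow> PV V A f x v = PV V A f y v"
proof (induction f arbitrary: v rule: pCons_induct)
  case 0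
  then show ?case by (simp add: PV_0)
next
  case (pCons a f)
  have "Lop V A (PV V A f x) v = Lop V A (PV V A f y) v"
    by (rule Lop_cong) (simp add: pCons.IH pCons.prems)
  then show ?case by (simp add: PV_pCons pCons.prems)
qed

lemma PV_const: "PV V A [:b:] x w = b * x w"
proof -
  have "PV V A 0 x = (\<lambda>w. 0)" by (simp add: fun_eq_iff PV_0)
  thus ?thesis by (simp add: PV_pCons Lop_zero)
qed

lemma PV_one: "PV V A 1 x w = x w"
  using PV_const[of V A 1 x w] by (simp add: one_pCons)

lemma PV_lin: "PV V A [:a, b:] x v = a * x v + b * Lop V A x v"
proof -
  have "PV V A [:b:] x = (\<lambda>w. b * x w)" by (simp add: fun_eq_iff PV_const)
  thus ?thesis by (simp add: PV_pCons Lop_scale)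
qed

definition hdist :: "nat \<Rightarrow> nat list \<Rightarrow> nat list \<Rightarrow> nat" where
  "hdist d u v = card {i. i < d \<and> u ! i \<noteq> v ! i}"

lemma hdist_le: "hdist d u v \<le> d"
proof -
  have "card {i. i < d \<and> u ! i \<noteq> v ! i} \<le> card {..<d}" by (rule card_mono) auto
  thus ?thesis by (simp add: hdist_def)
qed

lemma hdist_sym: "hdist d u v = hdist d v u"
  unfolding hdist_def by (metis)

lemma hdist_tri: "hdist d u z \<le> hdist d u y + hdist d y z"
proof -
  have "card {i. i < d \<and> u ! i \<noteq> z ! i} \<le> card ({i. i < d \<and> u ! i \<noteq> y ! i} \<union> {i. i < d \<and> y ! i \<noteq> z ! i})"
    by (rule card_mono) auto
  also have "\<dots> \<le> card {i. i < d \<and> u ! i \<noteq> y ! i} + card {i. i < d \<and> y ! i \<noteq> z ! i}"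
    by (rule card_Un_le)
  finally show ?thesis by (simp add: hdist_def)
qed

lemma hdist_0: assumes "u \<in> hamming_vertices d q" "v \<in> hamming_vertices d q"
  shows "hdist d u v = 0 \<longleftrightarrow> u = v"
proof
  assume "hdist d u v = 0"
  hence "{i. i < d \<and> u ! i \<noteq> v ! i} = {}" by (simp add: hdist_def)
  thus "u = v" using assms by (auto simp: hamming_vertices_def intro!: nth_equalityI)
qed (simp add: hdist_def)

lemma fin_V: "finite (hamming_vertices d q)"
proof -
  have "finite {xs. set xs \<subseteq> {0..<q} \<and> length xs = d}" by (rule finite_lists_length_eq) simp
  thus ?thesis by (simp add: hamming_vertices_def conj_commute)
qed

lemma hdist_path:
  "\<forall>u\<in>hamming_vertices d q. hdist d u v = n \<longrightarrow> (u, v) \<in> (edge_rel (hamming_vertices d q) (hamming_adj d)) ^^ n"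
  if v: "v \<in> hamming_vertices d q"
proof (induction n)
  case 0
  then show ?case using hdist_0[OF _ v] by auto
next
  case (Suc n)
  show ?case
  proof (intro ballI impI)
    fix u assume u: "u \<in> hamming_vertices d q" and h: "hdist d u v = Suc n"
    have "{i. i < d \<and> u ! i \<noteq> v ! i} \<noteq> {}" using h unfolding hdist_def by (metis card.empty nat.distinct(1))
    then obtain i where i: "i < d" "u ! i \<noteq> v ! i" by auto
    define u' where "u' = u[i := v ! i]"
    have lu: "length u = d" and lv: "length v = d" using u v by (auto simp: hamming_vertices_def)
    have "v ! i \<in> set v" using i lv by simp
    hence u'V: "u' \<in> hamming_vertices d q" using u v set_update_subset_insert[of u i "v!i"]
      by (auto simp: hamming_vertices_def u'_def)
    have "{j. j < d \<and> u' ! j \<noteq> v ! j} = {j. j < d \<and> u ! j \<noteq> v ! j} - {i}"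
      using lu i by (auto simp: u'_def nth_list_update)
    hence "hdist d u' v = n" using h i by (simp add: hdist_def)
    hence "(u', v) \<in> (edge_rel (hamming_vertices d q) (hamming_adj d)) ^^ n" using Suc.IH u'V by blast
    moreover have "{j. j < d \<and> u ! j \<noteq> u' ! j} = {i}"
      using lu i by (auto simp: u'_def nth_list_update)
    hence "(u, u') \<in> edge_rel (hamming_vertices d q) (hamming_adj d)"
      using u u'V by (simp add: edge_rel_def hamming_adj_def)
    ultimately show "(u, v) \<in> (edge_rel (hamming_vertices d q) (hamming_adj d)) ^^ Suc n"
      by (rule relpow_Suc_I2[rotated])
  qed
qed

lemma hdist_relpow_le: "(u, v) \<in> (edge_rel V (hamming_adj d)) ^^ n \<Longrightarrow> hdist d u v \<le> n"
proof (induction n arbitrary: v)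
  case 0
  then show ?case by (simp add: hdist_def)
next
  case (Suc n)
  from Suc.prems obtain y where y: "(u, y) \<in> (edge_rel V (hamming_adj d)) ^^ n"
    "(y, v) \<in> edge_rel V (hamming_adj d)" by auto
  have "hdist d y v = 1" using y(2) by (simp add: edge_rel_def hamming_adj_def hdist_def)
  thus ?case using hdist_tri[of d u v y] Suc.IH[OF y(1)] by simp
qed

lemma graph_dist_ham: assumes "u \<in> hamming_vertices d q" "v \<in> hamming_vertices d q"
  shows "graph_dist (hamming_vertices d q) (hamming_adj d) u v = hdist d u v"
  unfolding graph_dist_def
  by (rule Least_equality) (use hdist_path[OF assms(2)] assms(1) hdist_relpow_le in auto)

lemma nbr_set: assumes v: "v \<in> hamming_vertices d q"
  shows "{w \<in> hamming_vertices d q. hamming_adj d w v} =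
    (\<lambda>(i,a). v[i:=a]) ` (SIGMA i:{..<d}. {0..<q} - {v!i})"
proof (intro equalityI subsetI)
  have lv: "length v = d" using v by (simp add: hamming_vertices_def)
  fix w assume "w \<in> {w \<in> hamming_vertices d q. hamming_adj d w v}"
  hence w: "w \<in> hamming_vertices d q" "card {j. j < d \<and> w ! j \<noteq> v ! j} = 1"
    by (auto simp: hamming_adj_def)
  then obtain i where i: "{j. j < d \<and> w ! j \<noteq> v ! j} = {i}" by (metis card_1_singletonE)
  have lw: "length w = d" using w by (simp add: hamming_vertices_def)
  have "i < d" "w ! i \<noteq> v ! i" using i by auto
  moreover have "w ! i \<in> set w" using lw \<open>i < d\<close> by simp
  hence "w ! i < q" using w by (auto simp: hamming_vertices_def)
  moreover have "w = v[i := w ! i]"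
  proof (rule nth_equalityI)
    show "length w = length (v[i := w ! i])" using lw lv by simp
    fix j assume "j < length w"
    thus "w ! j = v[i := w ! i] ! j" using i lw lv by (cases "j = i") (auto simp: nth_list_update)
  qed
  ultimately show "w \<in> (\<lambda>(i,a). v[i:=a]) ` (SIGMA i:{..<d}. {0..<q} - {v!i})"
    by (intro image_eqI[where x="(i, w!i)"]) auto
next
  have lv: "length v = d" using v by (simp add: hamming_vertices_def)
  fix w assume "w \<in> (\<lambda>(i,a). v[i:=a]) ` (SIGMA i:{..<d}. {0..<q} - {v!i})"
  then obtain p where p: "p \<in> (SIGMA i:{..<d}. {0..<q} - {v!i})" "w = (\<lambda>(i,a). v[i:=a]) p" by blast
  obtain i a where "p = (i, a)" by fastforce
  hence ia: "i < d" "a < q" "a \<noteq> v ! i" and w: "w = v[i:=a]" using p by auto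
  have "w \<in> hamming_vertices d q" using v set_update_subset_insert[of v i a] ia
    by (auto simp: hamming_vertices_def w)
  moreover have "{j. j < d \<and> w ! j \<noteq> v ! j} = {i}" using ia lv by (auto simp: w nth_list_update)
  ultimately show "w \<in> {w \<in> hamming_vertices d q. hamming_adj d w v}"
    by (simp add: hamming_adj_def)
qed

lemma nbr_inj: assumes "length v = d"
  shows "inj_on (\<lambda>(i,a). v[i:=a]) (SIGMA i:{..<d}. {0..<q} - {v!i})"
proof (rule inj_onI)
  fix p p' assume p: "p \<in> (SIGMA i:{..<d}. {0..<q} - {v!i})" "p' \<in> (SIGMA i:{..<d}. {0..<q} - {v!i})"
    "(\<lambda>(i,a). v[i:=a]) p = (\<lambda>(i,a). v[i:=a]) p'"
  obtain i a where pi: "p = (i, a)" by fastforce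
  obtain j b where pj: "p' = (j, b)" by fastforce
  have h: "i < d" "a \<noteq> v ! i" "j < d" "b \<noteq> v ! j" "v[i := a] = v[j := b]" using p pi pj by auto
  have "i = j"
  proof (rule ccontr)
    assume "i \<noteq> j"
    hence "v[i := a] ! i = v ! i" using h by (simp add: nth_list_update)
    moreover have "v[i := a] ! i = a" by (metis h(1) assms nth_list_update_eq)
    ultimately show False using h by simp
  qed
  moreover have "a = b" using h assms \<open>i = j\<close>
    by (metis nth_list_update_eq)
  ultimately show "p = p'" by (simp add: pi pj)
qed

lemma Lop_ham: assumes v: "v \<in> hamming_vertices d q"
  shows "Lop (hamming_vertices d q) (adjacency_matrix (hamming_adj d)) x v
     = (\<Sum>i<d. \<Sum>a\<in>{0..<q}-{v!i}. x (v[i:=a]))"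
proof -
  have lv: "length v = d" using v by (simp add: hamming_vertices_def)
  have "Lop (hamming_vertices d q) (adjacency_matrix (hamming_adj d)) x v
      = (\<Sum>w\<in>{w \<in> hamming_vertices d q. hamming_adj d w v}. x w)"
    by (simp add: Lop_def adjacency_matrix_def sum.inter_filter fin_V if_distrib cong: if_cong)
  also have "\<dots> = (\<Sum>p\<in>(SIGMA i:{..<d}. {0..<q} - {v!i}). x ((\<lambda>(i,a). v[i:=a]) p))"
    unfolding nbr_set[OF v] by (rule sum.reindex[OF nbr_inj[OF lv], unfolded comp_def])
  also have "\<dots> = (\<Sum>i<d. \<Sum>a\<in>{0..<q}-{v!i}. x (v[i:=a]))"
    by (subst sum.Sigma) (auto simp: split_def)
  finally show ?thesis .
qed

lemma hdist_upd: assumes u: "u \<in> hamming_vertices d q" and v: "v \<in> hamming_vertices d q"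
  and i: "i < d" and a: "a \<noteq> v ! i"
  shows "hdist d u (v[i:=a]) = (if u!i = v!i then hdist d u v + 1
           else if a = u!i then hdist d u v - 1 else hdist d u v)"
proof -
  have lv: "length v = d" using v by (simp add: hamming_vertices_def)
  let ?S = "{j. j < d \<and> u ! j \<noteq> v ! j}"
  have fS: "finite ?S" by simp
  show ?thesis
  proof (cases "u!i = v!i")
    case True
    hence "{j. j < d \<and> u ! j \<noteq> v[i:=a] ! j} = insert i ?S" using lv i a
      by (auto simp: nth_list_update)
    moreover have "i \<notin> ?S" using True by simp
    ultimately show ?thesis using True fS by (simp add: hdist_def)
  next
    case False
    show ?thesis
    proof (cases "a = u!i")
      case True
      hence "{j. j < d \<and> u ! j \<noteq> v[i:=a] ! j} = ?S - {i}" using lv i a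
        by (auto simp: nth_list_update)
      moreover have "i \<in> ?S" using False i by simp
      ultimately show ?thesis using True False fS by (simp add: hdist_def)
    next
      case F2: False
      hence "{j. j < d \<and> u ! j \<noteq> v[i:=a] ! j} = ?S" using lv i a False
        by (auto simp: nth_list_update)
      thus ?thesis using F2 False by (simp add: hdist_def)
    qed
  qed
qed

lemma Lop_dist: assumes u: "u \<in> hamming_vertices d q" and v: "v \<in> hamming_vertices d q"
  shows "Lop (hamming_vertices d q) (adjacency_matrix (hamming_adj d)) (\<lambda>w. g (hdist d u w)) v
    = real (d - hdist d u v) * (real q - 1) * g (hdist d u v + 1)
      + real (hdist d u v) * (g (hdist d u v - 1) + (real q - 2) * g (hdist d u v))"
proof -
  let ?h = "hdist d u v"
  have lv: "length v = d" using v by (simp add: hamming_vertices_def)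
  have lu: "length u = d" using u by (simp add: hamming_vertices_def)
  have inner: "(\<Sum>a\<in>{0..<q}-{v!i}. g (hdist d u (v[i:=a]))) =
     (if u!i = v!i then (real q - 1) * g (?h+1) else g (?h-1) + (real q - 2) * g ?h)"
    if i: "i < d" for i
  proof -
    have "v ! i \<in> set v" "u ! i \<in> set u" using lv lu i by simp_all
    hence vi: "v ! i < q" and ui: "u ! i < q" using u v by (auto simp: hamming_vertices_def)
    show ?thesis
    proof (cases "u!i = v!i")
      case True
      have "(\<Sum>a\<in>{0..<q}-{v!i}. g (hdist d u (v[i:=a]))) = (\<Sum>a\<in>{0..<q}-{v!i}. g (?h+1))"
        by (rule sum.cong) (use hdist_upd[OF u v i] True in auto)
      also have "\<dots> = real (q - 1) * g (?h+1)" using vi by simp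
      finally show ?thesis using True vi by (simp add: of_nat_diff)
    next
      case False
      have eq: "{0..<q}-{v!i} = insert (u!i) ({0..<q}-{v!i,u!i})" using ui False by auto
      have "(\<Sum>a\<in>{0..<q}-{v!i}. g (hdist d u (v[i:=a]))) =
           g (?h - 1) + (\<Sum>a\<in>{0..<q}-{v!i,u!i}. g (hdist d u (v[i:=a])))"
        unfolding eq using hdist_upd[OF u v i, of "u!i"] False by (subst sum.insert) auto
      also have "(\<Sum>a\<in>{0..<q}-{v!i,u!i}. g (hdist d u (v[i:=a]))) = (\<Sum>a\<in>{0..<q}-{v!i,u!i}. g ?h)"
        by (rule sum.cong) (use hdist_upd[OF u v i] False in auto)
      also have "\<dots> = real (q - 2) * g ?h"
      proof -
        have "card ({0..<q}-{v!i,u!i}) = q - 2"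
          using vi ui False by (subst card_Diff_subset) auto
        thus ?thesis by simp
      qed
      finally show ?thesis using False vi ui by (simp add: of_nat_diff)
    qed
  qed
  have "Lop (hamming_vertices d q) (adjacency_matrix (hamming_adj d)) (\<lambda>w. g (hdist d u w)) v
     = (\<Sum>i<d. if u!i = v!i then (real q - 1) * g (?h+1) else g (?h-1) + (real q - 2) * g ?h)"
    unfolding Lop_ham[OF v] by (rule sum.cong) (simp_all add: inner)
  also have "\<dots> = real (card ({..<d} \<inter> {i. u!i = v!i})) * ((real q - 1) * g (?h+1))
      + real (card ({..<d} \<inter> - {i. u!i = v!i})) * (g (?h-1) + (real q - 2) * g ?h)"
    by (simp add: sum.If_cases)
  also have "card ({..<d} \<inter> - {i. u!i = v!i}) = ?h"
    unfolding hdist_def by (rule arg_cong[where f=card]) auto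
  also have "card ({..<d} \<inter> {i. u!i = v!i}) = d - ?h"
  proof -
    have "card ({..<d} \<inter> {i. u!i = v!i}) + card ({..<d} \<inter> - {i. u!i = v!i})
       = card ({..<d} \<inter> {i. u!i = v!i} \<union> {..<d} \<inter> - {i. u!i = v!i})"
      by (rule card_Un_disjoint[symmetric]) auto
    also have "{..<d} \<inter> {i. u!i = v!i} \<union> {..<d} \<inter> - {i. u!i = v!i} = {..<d}" by auto
    finally have "card ({..<d} \<inter> {i. u!i = v!i}) + card ({..<d} \<inter> - {i. u!i = v!i}) = d" by simp
    moreover have "card ({..<d} \<inter> - {i. u!i = v!i}) = ?h"
      unfolding hdist_def by (rule arg_cong[where f=card]) auto
    ultimately show ?thesis by simp
  qed
  finally show ?thesis by (simp add: algebra_simps)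
qed

definition gg :: "nat \<Rightarrow> nat \<Rightarrow> nat \<Rightarrow> real" where
  "gg d m h = (if h \<le> m then real ((d - h) choose (m - h)) else 0)"

lemma gg_rec: fixes Q :: real assumes "h \<le> d" "m < d"
  shows "real (d - h) * (Q - 1) * gg d m (h+1) + real h * (gg d m (h-1) + (Q - 2) * gg d m h)
       = (Q * real m - real d) * gg d m h + real (m+1) * gg d (m+1) h"
proof (cases "h \<le> m")
  case True
  then obtain n where m: "m = h + n" using le_Suc_ex by blast
  define r where "r = d - h - n - 1"
  have d: "d = h + n + 1 + r" using assms m by (simp add: r_def)
  define k where "k = n + 1 + r"
  have dh: "d - h = k" by (simp add: d k_def)
  define B0 where "B0 = real (k choose n)"
  define B1 where "B1 = real (k choose Suc n)"
  define Bm where "Bm = gg d m (h+1)"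
  have g0: "gg d m h = B0" by (simp add: gg_def dh m B0_def)
  have g1: "gg d (Suc m) h = B1" by (simp add: gg_def dh m B1_def Suc_diff_le)
  have gm: "real h * gg d m (h-1) = real h * (B0 + B1)"
  proof (cases h)
    case (Suc h')
    have "gg d m (h-1) = real (Suc k choose Suc n)"
      using Suc by (simp add: gg_def d m k_def)
    thus ?thesis by (simp add: B0_def B1_def)
  qed simp
  have f1: "real k * Bm = real n * B0"
  proof (cases n)
    case 0
    thus ?thesis by (simp add: Bm_def gg_def m)
  next
    case (Suc n')
    have "Bm = real (r + Suc n' choose n')" using Suc by (simp add: Bm_def gg_def m d add.commute)
    moreover have "Suc (r + Suc n') * (r + Suc n' choose n') = (Suc (r + Suc n') choose Suc n') * Suc n'"
      by (rule Suc_times_binomial_eq)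
    ultimately show ?thesis using Suc unfolding B0_def k_def
      by (metis (no_types, lifting) add.commute add_Suc_right mult.commute of_nat_mult plus_1_eq_Suc)
  qed
  have f2: "real (Suc n) * B1 = real (k - n) * B0"
  proof -
    have "Suc n * (k choose Suc n) = (k - n) * (k choose n)"
      using binomial_absorption[of n k] binomial_absorb_comp[of k n] by simp
    hence "real (Suc n * (k choose Suc n)) = real ((k - n) * (k choose n))" by simp
    thus ?thesis unfolding B0_def B1_def of_nat_mult .
  qed
  have kn: "real (k - n) = real k - real n" by (simp add: k_def)
  have L: "real (d - h) * (Q - 1) * gg d m (h+1) + real h * (gg d m (h-1) + (Q - 2) * gg d m h)
      = (Q - 1) * (real k * Bm) + real h * (B0 + B1) + real h * (Q - 2) * B0"
    using gm by (simp add: dh g0 Bm_def algebra_simps)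
  have R: "(Q * real m - real d) * gg d m h + real (m+1) * gg d (m+1) h
      = (Q * real m - real d) * B0 + real h * B1 + real (Suc n) * B1"
    by (simp add: g0 g1) (simp add: m algebra_simps)
  show ?thesis unfolding L R f1 f2 kn by (simp add: m d k_def algebra_simps)
next
  case False
  show ?thesis
  proof (cases "h = m + 1")
    case True
    thus ?thesis by (simp add: gg_def)
  next
    case False
    hence "\<not> (h - 1 \<le> m)" "\<not> h \<le> Suc m" "\<not> h + 1 \<le> m" using \<open>\<not> h \<le> m\<close> by arith+
    thus ?thesis using \<open>\<not> h \<le> m\<close> by (simp add: gg_def)
  qed
qed

lemma G_rec: assumes u: "u \<in> hamming_vertices d q" and v: "v \<in> hamming_vertices d q" and m: "m < d"
  shows "Lop (hamming_vertices d q) (adjacency_matrix (hamming_adj d)) (\<lambda>w. gg d m (hdist d u w)) v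
    = (real q * real m - real d) * gg d m (hdist d u v) + real (m+1) * gg d (m+1) (hdist d u v)"
  unfolding Lop_dist[OF u v] by (rule gg_rec[OF hdist_le m])

lemma factor_step: assumes u: "u \<in> hamming_vertices d q" and v: "v \<in> hamming_vertices d q" and m: "m < d"
  shows "PV (hamming_vertices d q) (adjacency_matrix (hamming_adj d))
      [: (- ham_b d q 0 + real q * real (d - m)) * c, c :] (\<lambda>w. K * gg d m (hdist d u w)) v
    = K * c * real (m+1) * gg d (m+1) (hdist d u v)"
proof -
  have dm: "real (d - m) = real d - real m" using m by (simp add: of_nat_diff)
  show ?thesis
    unfolding PV_lin Lop_scale G_rec[OF u v m] by (simp add: ham_b_def dm algebra_simps)
qed

lemma chain: assumes u: "u \<in> hamming_vertices d q"
  shows "j \<le> d \<Longrightarrow> \<forall>v\<in>hamming_vertices d q.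
     PV (hamming_vertices d q) (adjacency_matrix (hamming_adj d))
      (\<Prod>i\<in>{d-j+1..d}. [: (- ham_b d q 0 + real q * real i) * cc i, cc i :]) (\<lambda>w. gg d 0 (hdist d u w)) v
    = (\<Prod>i\<in>{d-j+1..d}. cc i) * fact j * gg d j (hdist d u v)"
proof (induction j)
  case 0
  then show ?case by (simp add: PV_one)
next
  case (Suc j)
  let ?V = "hamming_vertices d q" and ?A = "adjacency_matrix (hamming_adj d)"
  let ?F = "\<lambda>i. [: (- ham_b d q 0 + real q * real i) * cc i, cc i :]"
  have jd: "j < d" using Suc.prems by simp
  have S: "{d - Suc j + 1..d} = insert (d - j) {d-j+1..d}" using jd by auto
  have IH: "\<forall>v\<in>?V. PV ?V ?A (\<Prod>i\<in>{d-j+1..d}. ?F i) (\<lambda>w. gg d 0 (hdist d u w)) v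
    = (\<Prod>i\<in>{d-j+1..d}. cc i) * fact j * gg d j (hdist d u v)" using Suc by simp
  show ?case
  proof
    fix v assume v: "v \<in> ?V"
    have "PV ?V ?A (\<Prod>i\<in>{d - Suc j + 1..d}. ?F i) (\<lambda>w. gg d 0 (hdist d u w)) v
      = PV ?V ?A (?F (d - j)) (PV ?V ?A (\<Prod>i\<in>{d-j+1..d}. ?F i) (\<lambda>w. gg d 0 (hdist d u w))) v"
      unfolding S by (subst prod.insert) (simp_all add: PV_mult del: mult_pCons_left)
    also have "\<dots> = PV ?V ?A (?F (d - j)) (\<lambda>w. ((\<Prod>i\<in>{d-j+1..d}. cc i) * fact j) * gg d j (hdist d u w)) v"
      by (rule PV_cong[OF _ v]) (use IH in blast)
    also have "\<dots> = (\<Prod>i\<in>{d-j+1..d}. cc i) * fact j * cc (d - j) * real (j+1) * gg d (j+1) (hdist d u v)"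
      using factor_step[OF u v jd, of "cc (d - j)"] jd by (simp add: of_nat_diff)
    also have "\<dots> = (\<Prod>i\<in>{d - Suc j + 1..d}. cc i) * fact (Suc j) * gg d (Suc j) (hdist d u v)"
      unfolding S by (subst prod.insert) (auto simp: algebra_simps)
    finally show "PV ?V ?A (\<Prod>i\<in>{d - Suc j + 1..d}. ?F i) (\<lambda>w. gg d 0 (hdist d u w)) v
      = (\<Prod>i\<in>{d - Suc j + 1..d}. cc i) * fact (Suc j) * gg d (Suc j) (hdist d u v)" .
  qed
qed


lemma prod1: "(\<Prod>i\<in>{1..n}. 1 / (Q * real i)) = 1 / (Q ^ n * fact n)"
proof (induction n)
  case 0 then show ?case by simp
next
  case (Suc n)
  have "{1..Suc n} = insert (Suc n) {1..n}" by auto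
  then show ?case using Suc by (simp add: field_simps)
qed

lemma prod2: "(\<Prod>i\<in>{2..Suc n}. 1 / (Q * (real i - 1))) = 1 / (Q ^ n * fact n)"
proof (induction n)
  case 0 then show ?case by simp
next
  case (Suc n)
  have "{2..Suc (Suc n)} = insert (Suc (Suc n)) {2..Suc n}" by auto
  then show ?case using Suc by (simp add: field_simps)
qed

lemma gg_dd: "h \<le> d \<Longrightarrow> gg d d h = 1"
  by (simp add: gg_def)

lemma gg_dm1: assumes "h \<le> d" "1 \<le> d" shows "gg d (d - 1) h = real d - real h"
proof (cases "h \<le> d - 1")
  case True
  define k where "k = d - 1 - h"
  have "d - h = Suc k" "d - 1 - h = k" using True assms by (simp_all add: k_def)
  then show ?thesis using True assms by (simp add: gg_def of_nat_diff)
next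
  case False
  then have "h = d" using assms by arith
  then show ?thesis using False by (simp add: gg_def)
qed


lemma final_alg:
  fixes D Q x N H :: real
  assumes "D > 0" "Q > 1" "x > 0" "N = D - 1"
  shows "(D * x * (Q - 1)) * (1 / (Q * x) - (1 / (D * (Q - 1))) * ((1 / x) * ((D * (Q - 1) / Q) * (D - H)
      - (1 / Q) * ((Q * N - D) * (D - H) + D)))) = H"
proof -
  have "(D * (Q - 1) / Q) * (D - H) - (1 / Q) * ((Q * N - D) * (D - H) + D) = (D - H) - D / Q"
    unfolding assms(4) using assms by (simp add: field_simps)
  hence "(D * x * (Q - 1)) * (1 / (Q * x) - (1 / (D * (Q - 1))) * ((1 / x) * ((D * (Q - 1) / Q) * (D - H)
      - (1 / Q) * ((Q * N - D) * (D - H) + D))))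
      = (D * x * (Q - 1)) * (1 / (Q * x) - (1 / (D * (Q - 1))) * ((1 / x) * ((D - H) - D / Q)))" by simp
  also have "\<dots> = H" using assms by (simp add: field_simps)
  finally show ?thesis .
qed

theorem theorem3p2:
  fixes d q :: nat
  assumes "d \<ge> 1" and "q \<ge> 2"
  shows "\<forall>u\<in>hamming_vertices d q. \<forall>v\<in>hamming_vertices d q.
           distance_matrix (hamming_vertices d q) (hamming_adj d) u v =
           poly_matrix (hamming_vertices d q) (hamming_p d q)
             (adjacency_matrix (hamming_adj d)) u v"
proof (intro ballI)
  fix u v assume u: "u \<in> hamming_vertices d q" and v: "v \<in> hamming_vertices d q"
  let ?V = "hamming_vertices d q" and ?A = "adjacency_matrix (hamming_adj d)"
  let ?G = "\<lambda>m w. gg d m (hdist d u w)"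
  let ?h = "hdist d u v"
  define b0 where "b0 = ham_b d q 0"
  define n where "n = d - 1"
  have dn: "d = Suc n" using assms by (simp add: n_def)
  have hd: "?h \<le> d" by (rule hdist_le)
  have q0: "real q > 0" "real q - 1 \<noteq> 0" using assms by auto
  have lhs: "distance_matrix ?V (hamming_adj d) u v = real ?h"
    by (simp add: distance_matrix_def graph_dist_ham[OF u v])
  have cong0: "PV ?V ?A p (id_matrix u) v = PV ?V ?A p (?G 0) v" for p
    by (rule PV_cong[OF _ v]) (simp add: gg_def id_matrix_def hdist_0[OF u])
  define F1 where "F1 = (\<Prod>i\<in>{1..d}. [: (- b0 + real q * ham_c i) / (real q * ham_c i), 1 / (real q * ham_c i) :])"
  have F1': "F1 = (\<Prod>i\<in>{d-d+1..d}. [: (- ham_b d q 0 + real q * real i) * (1/(real q * real i)), 1/(real q * real i) :])"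
    unfolding F1_def b0_def by (rule prod.cong) (auto simp: ham_c_def)
  have P1: "(\<Prod>i\<in>{Suc 0..d}. 1 / (real q * real i)) = 1 / (real q ^ d * fact d)"
    using prod1[of "real q" d] by simp
  have X1: "PV ?V ?A F1 (?G 0) v = 1 / real q ^ d"
    using chain[OF u, of d "\<lambda>i. 1/(real q * real i)"] v unfolding F1'
    by (simp add: P1 gg_dd[OF hd])
  define F2 where "F2 = (\<Prod>i\<in>{0..d} - {1}. [: (- b0 + real q * ham_c i) / (real q * (ham_c i - 1)), 1 / (real q * (ham_c i - 1)) :])"
  define F2r where "F2r = (\<Prod>i\<in>{d-(d-1)+1..d}. [: (- ham_b d q 0 + real q * real i) * (1/(real q * (real i - 1))), 1/(real q * (real i - 1)) :])"
  have S2: "{0..d} - {1} = insert 0 {d-(d-1)+1..d}" using assms by auto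
  have F2r': "(\<Prod>i\<in>{d-(d-1)+1..d}. [: (- b0 + real q * ham_c i) / (real q * (ham_c i - 1)), 1 / (real q * (ham_c i - 1)) :]) = F2r"
    unfolding F2r_def b0_def by (rule prod.cong) (auto simp: ham_c_def)
  have F2': "F2 = [: b0 / real q, - 1 / real q :] * F2r"
  proof -
    have e1: "F2 = [: (- b0 + real q * ham_c 0) / (real q * (ham_c 0 - 1)), 1 / (real q * (ham_c 0 - 1)) :]
      * (\<Prod>i\<in>{d-(d-1)+1..d}. [: (- b0 + real q * ham_c i) / (real q * (ham_c i - 1)), 1 / (real q * (ham_c i - 1)) :])"
      unfolding F2_def S2 by (rule prod.insert) auto
    have e2: "[: (- b0 + real q * ham_c 0) / (real q * (ham_c 0 - 1)), 1 / (real q * (ham_c 0 - 1)) :]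
       = [: b0 / real q, - 1 / real q :]" by (simp add: ham_c_def)
    show ?thesis unfolding e1 e2 F2r' ..
  qed
  have c2: "\<forall>w\<in>?V. PV ?V ?A F2r (?G 0) w = (\<Prod>i\<in>{d-(d-1)+1..d}. 1/(real q * (real i - 1))) * fact (d-1) * ?G (d-1) w"
    unfolding F2r_def by (rule chain[OF u]) simp
  have s2: "{d-(d-1)+1..d} = {2..Suc n}" and e2: "d - 1 = n" using dn by simp_all
  have P2: "(\<Prod>i\<in>{2..Suc n}. 1/(real q * (real i - 1))) * fact n = 1 / real q ^ n"
    using prod2[of "real q" n] by simp
  have X2r: "\<forall>w\<in>?V. PV ?V ?A F2r (?G 0) w = (1 / real q ^ n) * ?G n w"
    using c2[unfolded s2, unfolded e2] by (simp only: P2)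
  have X2: "PV ?V ?A F2 (?G 0) v = (1 / real q ^ n) * ((b0 / real q) * (real d - real ?h)
      - (1 / real q) * ((real q * real n - real d) * (real d - real ?h) + real d))"
  proof -
    have "PV ?V ?A F2 (?G 0) v = PV ?V ?A [: b0 / real q, - 1 / real q :] (PV ?V ?A F2r (?G 0)) v"
      unfolding F2' by (simp add: PV_mult del: mult_pCons_left)
    also have "\<dots> = PV ?V ?A [: b0 / real q, - 1 / real q :] (\<lambda>w. (1 / real q ^ n) * ?G n w) v"
      by (rule PV_cong[OF _ v]) (use X2r in blast)
    also have "\<dots> = (1 / real q ^ n) * ((b0 / real q) * ?G n v - (1 / real q) * Lop ?V ?A (?G n) v)"
      unfolding PV_lin Lop_scale by (simp add: algebra_simps)
    also have "Lop ?V ?A (?G n) v = (real q * real n - real d) * ?G n v + real d * ?G d v"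
      using G_rec[OF u v, of n] dn by simp
    also have "?G n v = real d - real ?h" using gg_dm1[OF hd] assms by (simp add: n_def)
    also have "?G d v = 1" by (rule gg_dd[OF hd])
    finally show ?thesis by simp
  qed
  have hp: "hamming_p d q = smult (real d * real q ^ (d - 1) * (real q - 1)) (F1 - smult (1 / (real d * (real q - 1))) F2)"
    unfolding hamming_p_def Let_def F1_def F2_def b0_def ..
  have "poly_matrix ?V (hamming_p d q) ?A u v
     = (real d * real q ^ n * (real q - 1)) * (1 / real q ^ d - (1 / (real d * (real q - 1))) * PV ?V ?A F2 (?G 0) v)"
    unfolding poly_matrix_PV cong0 hp by (simp add: PV_smult PV_diff X1 n_def)
  also have "\<dots> = real ?h"
  proof -
    have qd: "real q ^ d = real q * real q ^ n" using dn by simp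
    have fa: "(real d * real q ^ n * (real q - 1)) * (1 / (real q * real q ^ n) - (1 / (real d * (real q - 1)))
      * ((1 / real q ^ n) * ((real d * (real q - 1) / real q) * (real d - real ?h)
      - (1 / real q) * ((real q * real n - real d) * (real d - real ?h) + real d)))) = real ?h"
      by (rule final_alg) (use assms dn in auto)
    show ?thesis unfolding X2 b0_def ham_b_def qd of_nat_0 diff_zero by (rule fa)
  qed
  finally show "distance_matrix ?V (hamming_adj d) u v = poly_matrix ?V (hamming_p d q) ?A u v"
    using lhs by simp
qed

end
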